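(* Let $X$ be an infinite compact metrizable space and $h\colon X\to X$ a minimal homeomorphism. Let $Y\subset X$ be closed with $\mathrm{int}(Y)\neq\varnothing$ and $\partial Y$ topologically $h$-small. For $y\in Y$ let $r(y)=\min\{m\ge1: h^m(y)\in Y\}$; the function $r$ takes only finitely many values, say $n(0)<n(1)<\cdots<n(l)$. For $0\le k\le l$ let $Y_k=\overline{\{y\in Y: r(y)=n(k)\}}$. Then $\partial(h^j(Y_k))$ is thin for all $0\le k\le l$ and $0\le j\le n(k)-1$.
   Context: $\partial A$ is the boundary of $A$. A closed set $F\subset X$ is topologically $h$-small if there is $m\in\mathbb{Z}_{+}$ such that whenever $d(0),\dots,d(m)$ are $m+1$ distinct integers, $h^{d(0)}(F)\cap\cdots\cap h^{d(m)}(F)=\varnothing$. For $F\subset X$ closed and $U\subset X$ open, write $F\prec U$ if there exist $M\in\mathbb{N}$, open sets $U_0,\dots,U_M\subset X$ and integers $d(0),\dots,d(M)$ such that $F\subset\bigcup_{j=0}^M U_j$, $h^{d(j)}(U_j)\subset U$ for all $j$, and the sets $h^{d(j)}(U_j)$ are pairwise disjoint. A closed set $F$ is thin if $F\prec U$ for every non-empty open $U\subset X$. *)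

theory Defs
  imports "HOL-Analysis.Analysis"
begin

definition zpow :: "('a \<Rightarrow> 'a) \<Rightarrow> int \<Rightarrow> 'a \<Rightarrow> 'a" where
  "zpow h d = (if 0 \<le> d then h ^^ nat d else (inv h) ^^ nat (- d))"

definition homeo :: "('a::topological_space \<Rightarrow> 'a) \<Rightarrow> bool" where
  "homeo h \<longleftrightarrow> bij h \<and> continuous_on UNIV h \<and> continuous_on UNIV (inv h)"

definition minimal_map :: "('a::topological_space \<Rightarrow> 'a) \<Rightarrow> bool" where
  "minimal_map h \<longleftrightarrow> (\<forall>E. closed E \<and> h ` E = E \<longrightarrow> E = {} \<or> E = UNIV)"

definition top_small :: "('a::topological_space \<Rightarrow> 'a) \<Rightarrow> 'a set \<Rightarrow> bool" where
  "top_small h F \<longleftrightarrow> closed F \<and>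
     (\<exists>m::nat. \<forall>d::nat \<Rightarrow> int. inj_on d {0..m} \<longrightarrow>
        (\<Inter>j\<in>{0..m}. zpow h (d j) ` F) = {})"

definition prec :: "('a::topological_space \<Rightarrow> 'a) \<Rightarrow> 'a set \<Rightarrow> 'a set \<Rightarrow> bool" where
  "prec h F U \<longleftrightarrow> (\<exists>(M::nat) (V::nat \<Rightarrow> 'a set) (d::nat \<Rightarrow> int).
     (\<forall>j\<le>M. open (V j)) \<and> F \<subseteq> (\<Union>j\<le>M. V j) \<and>
     (\<forall>j\<le>M. zpow h (d j) ` V j \<subseteq> U) \<and>
     (\<forall>i\<le>M. \<forall>j\<le>M. i \<noteq> j \<longrightarrow> zpow h (d i) ` V i \<inter> zpow h (d j) ` V j = {}))"

definition thin :: "('a::topological_space \<Rightarrow> 'a) \<Rightarrow> 'a set \<Rightarrow> bool" where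
  "thin h F \<longleftrightarrow> closed F \<and> (\<forall>U. open U \<and> U \<noteq> {} \<longrightarrow> prec h F U)"

definition return_time :: "('a \<Rightarrow> 'a) \<Rightarrow> 'a set \<Rightarrow> 'a \<Rightarrow> nat" where
  "return_time h Y y = (LEAST m. 1 \<le> m \<and> (h ^^ m) y \<in> Y)"

end

theory Submission
  imports Defs
begin


lemma zpow_nat: "zpow h (int n) = h ^^ n"
  by (simp add: zpow_def)

lemma zpow_neg_nat: "zpow h (- int n) = inv h ^^ n"
  unfolding zpow_def by (cases "n = 0") auto

lemma zpow_0[simp]: "zpow h 0 = id"
  by (simp add: zpow_def)

lemma zpow_succ:
  assumes "bij h" shows "zpow h (a + 1) = h \<circ> zpow h a"
proof (cases "0 \<le> a")
  case True
  then obtain n where a: "a = int n" by (metis nonneg_eq_int)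
  have "a + 1 = int (Suc n)" using a by simp
  then show ?thesis using a by (simp only: zpow_nat) simp
next
  case False
  then obtain n where a: "a = - int (Suc n)" proof -
    have "0 < - a" using False by simp
    then obtain k where k: "- a = int k" "0 < k" using pos_int_cases by blast
    then have "a = - int (Suc (k - 1))" by simp
    then show ?thesis by (rule that)
  qed
  have a1: "a + 1 = - int n" using a by simp
  have "h \<circ> inv h = id" using bij_is_surj[OF assms] surj_iff by blast
  then have "h \<circ> (inv h \<circ> inv h ^^ n) = inv h ^^ n" by (simp add: comp_assoc[symmetric])
  moreover have "inv h ^^ Suc n = inv h \<circ> inv h ^^ n" by (rule funpow.simps(2))
  ultimately show ?thesis using a a1 by (simp only: zpow_neg_nat)
qed

lemma zpow_pred:
  assumes "bij h" shows "zpow h (a - 1) = inv h \<circ> zpow h a"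
proof -
  have "inv h \<circ> h = id" using bij_is_inj[OF assms] inj_iff by blast
  then have "inv h \<circ> (h \<circ> zpow h (a - 1)) = zpow h (a - 1)" by (simp add: comp_assoc[symmetric])
  moreover have "h \<circ> zpow h (a - 1) = zpow h a" using zpow_succ[OF assms, of "a - 1"] by simp
  ultimately show ?thesis by simp
qed

lemma zpow_add:
  assumes "bij h" shows "zpow h (a + b) = zpow h a \<circ> zpow h b"
proof (induction a rule: int_induct[where k=0])
  case base
  then show ?case by simp
next
  case (step1 i)
  have "zpow h (i + 1 + b) = zpow h ((i + b) + 1)" by (simp add: ac_simps)
  also have "\<dots> = h \<circ> zpow h (i + b)" by (rule zpow_succ[OF assms])
  also have "\<dots> = zpow h (i + 1) \<circ> zpow h b" using step1(2) zpow_succ[OF assms, of i] by (simp add: fun_eq_iff)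
  finally show ?case .
next
  case (step2 i)
  have "zpow h (i - 1 + b) = zpow h ((i + b) - 1)" by (rule arg_cong[where f="zpow h"]) simp
  also have "\<dots> = inv h \<circ> zpow h (i + b)" by (rule zpow_pred[OF assms])
  also have "\<dots> = zpow h (i - 1) \<circ> zpow h b" using step2(2) zpow_pred[OF assms, of i] by (simp add: fun_eq_iff)
  finally show ?case .
qed

lemma zpow_add_apply:
  assumes "bij h" shows "zpow h a (zpow h b x) = zpow h (a + b) x"
  by (simp add: zpow_add[OF assms])

lemma zpow_inv_apply:
  assumes "bij h" shows "zpow h (- a) (zpow h a x) = x"
  by (simp add: zpow_add_apply[OF assms])

lemma zpow_inv_apply2:
  assumes "bij h" shows "zpow h a (zpow h (- a) x) = x"
  by (simp add: zpow_add_apply[OF assms])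

lemma zpow_image_eq:
  assumes "bij h" shows "zpow h a ` S = zpow h (- a) -` S"
proof
  show "zpow h a ` S \<subseteq> zpow h (- a) -` S" using zpow_inv_apply[OF assms] by auto
  show "zpow h (- a) -` S \<subseteq> zpow h a ` S"
  proof
    fix x assume "x \<in> zpow h (- a) -` S"
    then show "x \<in> zpow h a ` S" using zpow_inv_apply2[OF assms, of a x] by (metis image_eqI vimageE)
  qed
qed

lemma zpow_mem_image:
  assumes "bij h" shows "x \<in> zpow h a ` S \<longleftrightarrow> zpow h (- a) x \<in> S"
  using zpow_image_eq[OF assms] by auto

lemma zpow_surj_vimage:
  assumes "bij h" shows "zpow h a ` (zpow h a -` S) = S"
  using zpow_inv_apply2[OF assms] by (metis subsetI subset_antisym image_subset_iff_subset_vimage image_eqI vimageI order_refl)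

lemma homeo_bij: "homeo h \<Longrightarrow> bij h" by (simp add: homeo_def)

lemma cont_funpow: fixes f :: "'a::topological_space \<Rightarrow> 'a" shows "continuous_on UNIV f \<Longrightarrow> continuous_on UNIV (f ^^ n)"
proof (induction n)
  case 0
  have "f ^^ (0::nat) = (\<lambda>x. x)" by (simp add: fun_eq_iff)
  then show ?case by (simp add: continuous_on_id)
next
  case (Suc n)
  then show ?case by (simp add: continuous_on_compose2[of UNIV f UNIV "f ^^ n"])
qed

lemma cont_zpow:
  assumes "homeo h" shows "continuous_on UNIV (zpow h a)"
  using assms unfolding homeo_def zpow_def by (simp add: cont_funpow)

lemma open_zpow_vimage: "homeo h \<Longrightarrow> open S \<Longrightarrow> open (zpow h a -` S)"
  by (metis cont_zpow open_vimage)

lemma closed_zpow_vimage: "homeo h \<Longrightarrow> closed S \<Longrightarrow> closed (zpow h a -` S)"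
  by (metis cont_zpow closed_vimage)

lemma open_zpow_image: "homeo h \<Longrightarrow> open S \<Longrightarrow> open (zpow h a ` S)"
  by (simp add: zpow_image_eq homeo_bij open_zpow_vimage)

lemma closed_zpow_image: "homeo h \<Longrightarrow> closed S \<Longrightarrow> closed (zpow h a ` S)"
  by (simp add: zpow_image_eq homeo_bij closed_zpow_vimage)

definition hits :: "('a \<Rightarrow> 'a) \<Rightarrow> 'a set \<Rightarrow> 'a \<Rightarrow> int set" where
  "hits h F x = {a. zpow h a x \<in> F}"

definition bnd :: "('a \<Rightarrow> 'a) \<Rightarrow> 'a set \<Rightarrow> nat \<Rightarrow> bool" where
  "bnd h F m \<longleftrightarrow> (\<forall>x. finite (hits h F x) \<and> card (hits h F x) \<le> m)"

lemma bnd_subset: "B \<subseteq> A \<Longrightarrow> bnd h A m \<Longrightarrow> bnd h B m"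
proof -
  assume BA: "B \<subseteq> A" and b: "bnd h A m"
  have sub: "hits h B x \<subseteq> hits h A x" for x using BA by (auto simp: hits_def)
  show "bnd h B m" unfolding bnd_def
  proof
    fix x
    have f: "finite (hits h A x)" "card (hits h A x) \<le> m" using b by (auto simp: bnd_def)
    then show "finite (hits h B x) \<and> card (hits h B x) \<le> m"
      using sub[of x] by (meson card_mono finite_subset order_trans)
  qed
qed

lemma bnd_mono: "bnd h A m \<Longrightarrow> m \<le> m' \<Longrightarrow> bnd h A m'"
  unfolding bnd_def using order_trans by blast

lemma bnd_Un: "bnd h A m1 \<Longrightarrow> bnd h B m2 \<Longrightarrow> bnd h (A \<union> B) (m1 + m2)"
proof -
  assume a: "bnd h A m1" and b: "bnd h B m2"
  have eq: "hits h (A \<union> B) x = hits h A x \<union> hits h B x" for x by (auto simp: hits_def)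
  show ?thesis unfolding bnd_def
  proof
    fix x
    have "finite (hits h A x)" "card (hits h A x) \<le> m1" "finite (hits h B x)" "card (hits h B x) \<le> m2"
      using a b by (auto simp: bnd_def)
    then show "finite (hits h (A \<union> B) x) \<and> card (hits h (A \<union> B) x) \<le> m1 + m2"
      unfolding eq using card_Un_le[of "hits h A x" "hits h B x"] by auto
  qed
qed

lemma bnd_empty: "bnd h {} m"
  by (simp add: bnd_def hits_def)

lemma bnd_UN: "finite I \<Longrightarrow> (\<forall>i\<in>I. bnd h (A i) m) \<Longrightarrow> bnd h (\<Union>i\<in>I. A i) (card I * m)"
proof (induction I rule: finite_induct)
  case empty then show ?case by (simp add: bnd_empty)
next
  case (insert i I)
  have "bnd h (A i \<union> (\<Union>i\<in>I. A i)) (m + card I * m)"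
    using insert by (intro bnd_Un) auto
  then show ?case using insert by simp
qed

lemma bnd_vimage:
  assumes "bij h" "bnd h F m" shows "bnd h (zpow h c -` F) m"
proof -
  have eq: "hits h (zpow h c -` F) x = (\<lambda>b. b - c) ` hits h F x" for x
  proof -
    have "hits h (zpow h c -` F) x = {a. zpow h (c + a) x \<in> F}"
      by (simp add: hits_def zpow_add_apply[OF assms(1)])
    also have "\<dots> = (\<lambda>b. b - c) ` hits h F x"
      unfolding hits_def by (auto simp: image_iff intro!: exI[where x="c + _"])
    finally show ?thesis .
  qed
  have inj: "inj (\<lambda>b::int. b - c)" by (simp add: inj_on_def)
  show ?thesis unfolding bnd_def eq
    using assms(2) unfolding bnd_def by (simp add: card_image inj_on_subset[OF inj])
qed

lemma bnd_zero: "bnd h F 0 \<Longrightarrow> F = {}"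
proof (rule ccontr)
  assume b: "bnd h F 0" and "F \<noteq> {}"
  then obtain x where x: "x \<in> F" by auto
  then have "0 \<in> hits h F x" by (simp add: hits_def)
  moreover have "finite (hits h F x)" "card (hits h F x) \<le> 0" using b by (auto simp: bnd_def)
  ultimately show False by auto
qed

lemma bnd_G:
  assumes "bij h" "k \<noteq> 0" "bnd h F (Suc m)"
  shows "bnd h (F \<inter> zpow h k ` F) m"
  unfolding bnd_def
proof
  fix x
  let ?S = "hits h F x" and ?T = "hits h (F \<inter> zpow h k ` F) x"
  have fS: "finite ?S" "card ?S \<le> Suc m" using assms(3) by (auto simp: bnd_def)
  have T: "?T = {a \<in> ?S. a - k \<in> ?S}"
    unfolding hits_def by (auto simp: zpow_mem_image[OF assms(1)] zpow_add_apply[OF assms(1)])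
  have TS: "?T \<subseteq> ?S" using T by auto
  have fT: "finite ?T" using TS fS by (meson finite_subset)
  show "finite ?T \<and> card ?T \<le> m"
  proof (cases "?T = {}")
    case True then show ?thesis by simp
  next
    case False
    define e where "e = (if 0 < k then Min ?T - k else Max ?T - k)"
    have eS: "e \<in> ?S"
      using Min_in[OF fT False] Max_in[OF fT False] T unfolding e_def by auto
    have eT: "e \<notin> ?T"
    proof
      assume "e \<in> ?T"
      show False
      proof (cases "0 < k")
        case True
        then have "Min ?T \<le> e" using Min_le[OF fT \<open>e \<in> ?T\<close>] by simp
        then show False using True unfolding e_def by simp
      next
        case False
        then have "e \<le> Max ?T" using Max_ge[OF fT \<open>e \<in> ?T\<close>] by simp
        then show False using False assms(2) unfolding e_def by simp
      qed
    qed
    have "insert e ?T \<subseteq> ?S" using eS TS by auto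
    then have "card (insert e ?T) \<le> card ?S" using fS by (simp add: card_mono)
    then have "Suc (card ?T) \<le> Suc m" using eT fT fS by simp
    then show ?thesis using fT by simp
  qed
qed

lemma top_small_bnd:
  assumes "bij h" "top_small h F" shows "\<exists>m. bnd h F m"
proof -
  obtain m where m: "\<forall>d::nat \<Rightarrow> int. inj_on d {0..m} \<longrightarrow> (\<Inter>j\<in>{0..m}. zpow h (d j) ` F) = {}"
    using assms(2) by (auto simp: top_small_def)
  have "bnd h F m" unfolding bnd_def
  proof (rule ccontr)
    assume "\<not> (\<forall>x. finite (hits h F x) \<and> card (hits h F x) \<le> m)"
    then obtain x where x: "\<not> (finite (hits h F x) \<and> card (hits h F x) \<le> m)" by blast
    obtain T where T: "finite T" "card T = Suc m" "T \<subseteq> hits h F x"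
    proof (cases "finite (hits h F x)")
      case True
      then have "Suc m \<le> card (hits h F x)" using x by simp
      then show ?thesis using that obtain_subset_with_card_n True by (metis finite_subset)
    next
      case False
      then show ?thesis using that infinite_arbitrarily_large by blast
    qed
    have "card {0..m} = card (uminus ` T)" using T by (simp add: card_image)
    then obtain d where d: "bij_betw d {0..m} (uminus ` T)"
      using finite_same_card_bij[of "{0..m}" "uminus ` T"] T by auto
    have "x \<in> (\<Inter>j\<in>{0..m}. zpow h (d j) ` F)"
    proof
      fix j assume "j \<in> {0..m}"
      then have "d j \<in> uminus ` T" using d by (auto simp: bij_betw_def)
      then have "- d j \<in> hits h F x" using T by auto
      then show "x \<in> zpow h (d j) ` F" by (simp add: zpow_mem_image[OF assms(1)] hits_def)
    qed
    moreover have "inj_on d {0..m}" using d by (simp add: bij_betw_def)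
    ultimately show False using m by auto
  qed
  then show ?thesis by blast
qed

lemma precE:
  assumes "prec h F U"
  obtains M :: nat and V d where "\<forall>j\<le>M. open (V j)" "F \<subseteq> (\<Union>j\<le>M. V j)" "\<forall>j\<le>M. zpow h (d j) ` V j \<subseteq> U"
     "\<forall>i\<le>M. \<forall>j\<le>M. i \<noteq> j \<longrightarrow> zpow h (d i) ` V i \<inter> zpow h (d j) ` V j = {}"
  using assms unfolding prec_def
  apply (elim exE conjE)
  apply (rule that)
     apply assumption+
  done

lemma precI:
  fixes M :: nat
  assumes "\<forall>j\<le>M. open (V j)" "F \<subseteq> (\<Union>j\<le>M. V j)" "\<forall>j\<le>M. zpow h (d j) ` V j \<subseteq> U"
     "\<forall>i\<le>M. \<forall>j\<le>M. i \<noteq> j \<longrightarrow> zpow h (d i) ` V i \<inter> zpow h (d j) ` V j = {}"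
  shows "prec h F U"
  unfolding prec_def
  apply (rule exI[where x=M], rule exI[where x=V], rule exI[where x=d])
  using assms by (intro conjI)

lemma prec_fam:
  fixes I :: "'i set" and V :: "'i \<Rightarrow> 'a::topological_space set" and d :: "'i \<Rightarrow> int"
  assumes "finite I" "\<forall>i\<in>I. open (V i)" "F \<subseteq> (\<Union>i\<in>I. V i)"
    "\<forall>i\<in>I. zpow h (d i) ` V i \<subseteq> U"
    "\<forall>i\<in>I. \<forall>j\<in>I. i \<noteq> j \<longrightarrow> zpow h (d i) ` V i \<inter> zpow h (d j) ` V j = {}"
  shows "prec h F U"
proof -
  obtain n :: nat and f where nf: "I = f ` {i. i < n}" "inj_on f {i. i < n}"
    using finite_imp_nat_seg_image_inj_on[OF assms(1)] by blast
  define V' where "V' j = (if j < n then V (f j) else {})" for j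
  define d' where "d' j = d (f j)" for j
  show ?thesis unfolding prec_def
  proof (intro exI[where x=n] exI[where x=V'] exI[where x=d'] conjI allI impI)
    fix j assume "j \<le> n"
    show "open (V' j)" using assms(2) nf unfolding V'_def by auto
    show "zpow h (d' j) ` V' j \<subseteq> U" using assms(4) nf unfolding V'_def d'_def by auto
  next
    show "F \<subseteq> (\<Union>j\<le>n. V' j)"
    proof
      fix x assume "x \<in> F"
      then obtain i where "i \<in> I" "x \<in> V i" using assms(3) by auto
      then obtain j where "j < n" "i = f j" using nf by auto
      then show "x \<in> (\<Union>j\<le>n. V' j)" using \<open>x \<in> V i\<close> unfolding V'_def by (auto intro!: bexI[where x=j])
    qed
  next
    fix i j assume ij: "i \<le> n" "j \<le> n" "i \<noteq> j"
    show "zpow h (d' i) ` V' i \<inter> zpow h (d' j) ` V' j = {}"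
    proof (cases "i < n \<and> j < n")
      case True
      then have "f i \<noteq> f j" using nf(2) ij by (auto simp: inj_on_def)
      moreover have "f i \<in> I" "f j \<in> I" using True nf by auto
      ultimately show ?thesis using assms(5) True unfolding V'_def d'_def by auto
    next
      case False
      then show ?thesis unfolding V'_def by auto
    qed
  qed
qed

lemma prec_mono:
  fixes h :: "'a::topological_space \<Rightarrow> 'a"
  assumes "prec h A U" "B \<subseteq> A" "U \<subseteq> U'" shows "prec h B U'"
proof -
  obtain M :: nat and V d where 1: "\<forall>j\<le>M. open (V j)" "A \<subseteq> (\<Union>j\<le>M. V j)" "\<forall>j\<le>M. zpow h (d j) ` V j \<subseteq> U"
     "\<forall>i\<le>M. \<forall>j\<le>M. i \<noteq> j \<longrightarrow> zpow h (d i) ` V i \<inter> zpow h (d j) ` V j = {}"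
    using assms(1) by (rule precE)
  have "B \<subseteq> (\<Union>j\<le>M. V j)" using 1(2) assms(2) by (rule order_trans[rotated])
  moreover have "\<forall>j\<le>M. zpow h (d j) ` V j \<subseteq> U'" using 1(3) assms(3) by (meson order_trans)
  ultimately show ?thesis using 1(1) 1(4) by (intro precI)
qed

lemma prec_empty: "prec h {} U"
  by (rule prec_fam[where I="{}"]) auto


lemma prec_combine:
  fixes h :: "'a::topological_space \<Rightarrow> 'a"
  assumes "prec h A U1" "prec h B U2" "U1 \<inter> U2 = {}"
  shows "prec h (A \<union> B) (U1 \<union> U2)"
proof -
  obtain M1 :: nat and V1 d1 where 1: "\<forall>j\<le>M1. open (V1 j)" "A \<subseteq> (\<Union>j\<le>M1. V1 j)"
     "\<forall>j\<le>M1. zpow h (d1 j) ` V1 j \<subseteq> U1"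
     "\<forall>i\<le>M1. \<forall>j\<le>M1. i \<noteq> j \<longrightarrow> zpow h (d1 i) ` V1 i \<inter> zpow h (d1 j) ` V1 j = {}"
    using assms(1) by (rule precE)
  obtain M2 :: nat and V2 d2 where 2: "\<forall>j\<le>M2. open (V2 j)" "B \<subseteq> (\<Union>j\<le>M2. V2 j)"
     "\<forall>j\<le>M2. zpow h (d2 j) ` V2 j \<subseteq> U2"
     "\<forall>i\<le>M2. \<forall>j\<le>M2. i \<noteq> j \<longrightarrow> zpow h (d2 i) ` V2 i \<inter> zpow h (d2 j) ` V2 j = {}"
    using assms(2) by (rule precE)
  let ?I = "Inl ` {..M1} \<union> Inr ` {..M2}"
  let ?V = "case_sum V1 V2" and ?d = "case_sum d1 d2"
  show ?thesis
  proof (rule prec_fam[where I="?I" and V="?V" and d="?d"])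
    show "finite ?I" by simp
    show "\<forall>i\<in>?I. open (?V i)" using 1(1) 2(1) by auto
    show "A \<union> B \<subseteq> (\<Union>i\<in>?I. ?V i)"
    proof
      fix x assume "x \<in> A \<union> B"
      then show "x \<in> (\<Union>i\<in>?I. ?V i)"
      proof
        assume "x \<in> A" then obtain j where "j \<le> M1" "x \<in> V1 j" using 1(2) by auto
        then show ?thesis by (intro UN_I[where a="Inl j"]) auto
      next
        assume "x \<in> B" then obtain j where "j \<le> M2" "x \<in> V2 j" using 2(2) by auto
        then show ?thesis by (intro UN_I[where a="Inr j"]) auto
      qed
    qed
    show "\<forall>i\<in>?I. zpow h (?d i) ` ?V i \<subseteq> U1 \<union> U2" using 1(3) 2(3) by fastforce
    show "\<forall>i\<in>?I. \<forall>j\<in>?I. i \<noteq> j \<longrightarrow> zpow h (?d i) ` ?V i \<inter> zpow h (?d j) ` ?V j = {}"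
    proof (intro ballI impI)
      fix i j assume i: "i \<in> ?I" and j: "j \<in> ?I" and ij: "i \<noteq> j"
      show "zpow h (?d i) ` ?V i \<inter> zpow h (?d j) ` ?V j = {}"
      proof (cases i)
        case (Inl a) note ia = this
        show ?thesis
        proof (cases j)
          case (Inl b) then show ?thesis using ia i j ij 1(4) by auto
        next
          case (Inr b)
          have "a \<le> M1" "b \<le> M2" using ia Inr i j by auto
          then have "zpow h (d1 a) ` V1 a \<subseteq> U1" "zpow h (d2 b) ` V2 b \<subseteq> U2" using 1(3) 2(3) by blast+
          then show ?thesis using ia Inr assms(3) by auto
        qed
      next
        case (Inr a) note ia = this
        show ?thesis
        proof (cases j)
          case (Inr b) then show ?thesis using ia i j ij 2(4) by auto
        next
          case (Inl b)
          have "a \<le> M2" "b \<le> M1" using ia Inl i j by auto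
          then have "zpow h (d2 a) ` V2 a \<subseteq> U2" "zpow h (d1 b) ` V1 b \<subseteq> U1" using 1(3) 2(3) by blast+
          then show ?thesis using ia Inl assms(3) by auto
        qed
      qed
    qed
  qed
qed

lemma orbit_cover:
  fixes h :: "'a::metric_space \<Rightarrow> 'a"
  assumes "homeo h" "minimal_map h" "open U" "U \<noteq> {}"
  shows "(\<Union>n. zpow h n ` U) = UNIV"
proof -
  have bij: "bij h" using assms(1) by (rule homeo_bij)
  define Orb where "Orb = (\<Union>n. zpow h n ` U)"
  have "open Orb" unfolding Orb_def using assms(1,3) by (auto intro!: open_zpow_image)
  then have cE: "closed (- Orb)" by (simp add: closed_Compl)
  have "h ` Orb = (\<Union>n. zpow h (n + 1) ` U)"
    unfolding Orb_def by (simp add: image_UN image_comp zpow_succ[OF bij])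
  also have "\<dots> = Orb"
  proof
    show "(\<Union>n. zpow h (n + 1) ` U) \<subseteq> Orb" unfolding Orb_def by blast
    show "Orb \<subseteq> (\<Union>n. zpow h (n + 1) ` U)"
    proof
      fix x assume "x \<in> Orb"
      then obtain n where "x \<in> zpow h n ` U" unfolding Orb_def by blast
      then have "x \<in> zpow h ((n - 1) + 1) ` U" by simp
      then show "x \<in> (\<Union>n. zpow h (n + 1) ` U)" by blast
    qed
  qed
  finally have "h ` (- Orb) = - Orb" by (simp add: bij_image_Compl_eq[OF bij])
  then have "- Orb = {} \<or> - Orb = UNIV" using assms(2) cE unfolding minimal_map_def by blast
  moreover have UO: "U \<subseteq> Orb" unfolding Orb_def by (metis UNIV_I UN_upper id_apply image_id zpow_0)
  moreover have "- Orb \<noteq> UNIV" using UO assms(4) by auto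
  ultimately have "- Orb = {}" by blast
  then show ?thesis unfolding Orb_def by blast
qed

lemma finite_orbit_cover:
  fixes h :: "'a::metric_space \<Rightarrow> 'a"
  assumes "compact (UNIV :: 'a set)" "homeo h" "minimal_map h" "open U" "U \<noteq> {}" "closed F"
  obtains D where "finite D" "F \<subseteq> (\<Union>n\<in>D. zpow h n ` U)"
proof -
  have "compact F" using compact_Int_closed[OF assms(1) assms(6)] by simp
  moreover have "F \<subseteq> (\<Union>n\<in>UNIV. zpow h n ` U)" using orbit_cover[OF assms(2-5)] by simp
  ultimately obtain D where "D \<subseteq> UNIV" "finite D" "F \<subseteq> (\<Union>n\<in>D. zpow h n ` U)"
    using compactE_image[of F UNIV "\<lambda>n. zpow h n ` U"] open_zpow_image[OF assms(2) assms(4)] by blast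
  then show ?thesis using that by blast
qed

lemma split_open:
  fixes h :: "'a::metric_space \<Rightarrow> 'a" and U :: "'a set"
  assumes "compact (UNIV :: 'a set)" "infinite (UNIV :: 'a set)" "homeo h" "minimal_map h" "open U" "U \<noteq> {}"
  obtains U1 U2 where "open U1" "open U2" "U1 \<noteq> {}" "U2 \<noteq> {}" "U1 \<subseteq> U" "U2 \<subseteq> U" "U1 \<inter> U2 = {}"
proof -
  obtain u where u: "u \<in> U" using assms(6) by blast
  have "\<exists>v\<in>U. v \<noteq> u"
  proof (rule ccontr)
    assume "\<not> (\<exists>v\<in>U. v \<noteq> u)"
    then have Uu: "U = {u}" using u by blast
    obtain D where D: "finite D" "UNIV \<subseteq> (\<Union>n\<in>D. zpow h n ` U)"
      using finite_orbit_cover[OF assms(1) assms(3) assms(4) assms(5) assms(6) closed_UNIV] by metis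
    have "finite (\<Union>n\<in>D. zpow h n ` U)" using D(1) Uu by simp
    then show False using D(2) assms(2) by (metis finite_subset)
  qed
  then obtain v where v: "v \<in> U" "v \<noteq> u" by blast
  define r where "r = dist u v / 2"
  have r: "r > 0" using v unfolding r_def by simp
  let ?U1 = "U \<inter> ball u r" and ?U2 = "U \<inter> ball v r"
  have disj: "?U1 \<inter> ?U2 = {}"
  proof (rule ccontr)
    assume "?U1 \<inter> ?U2 \<noteq> {}"
    then obtain z where "dist u z < r" "dist v z < r" by auto
    then have "dist u v < 2 * r" using dist_triangle3[of u v z] by (simp add: dist_commute)
    then show False unfolding r_def by simp
  qed
  have uv: "u \<in> ?U1" "v \<in> ?U2" using u v r by auto
  show ?thesis
    apply (rule that[of ?U1 ?U2])
    using disj uv assms(5) by auto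
qed

lemma sep_closed:
  fixes S T :: "'a::metric_space set"
  assumes "closed S" "closed T" "S \<inter> T = {}"
  obtains U V where "open U" "open V" "S \<subseteq> U" "T \<subseteq> V" "U \<inter> V = {}"
proof (cases "S = {} \<or> T = {}")
  case True
  then show ?thesis using that[of "if S = {} then {} else UNIV" "if S = {} then UNIV else {}"] by auto
next
  case False
  let ?U = "{x. infdist x S < infdist x T}" and ?V = "{x. infdist x T < infdist x S}"
  have oU: "open ?U" "open ?V"
    by (auto intro!: open_Collect_less continuous_on_infdist continuous_on_id)
  have "S \<subseteq> ?U"
  proof
    fix x assume x: "x \<in> S"
    then have "x \<notin> closure T" using assms by (simp add: closure_closed) blast
    then have "infdist x T \<noteq> 0" using in_closure_iff_infdist_zero[of T x] False by auto
    then show "x \<in> ?U" using x infdist_nonneg[of x T] by auto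
  qed
  moreover have "T \<subseteq> ?V"
  proof
    fix x assume x: "x \<in> T"
    then have "x \<notin> closure S" using assms by (simp add: closure_closed) blast
    then have "infdist x S \<noteq> 0" using in_closure_iff_infdist_zero[of S x] False by auto
    then show "x \<in> ?V" using x infdist_nonneg[of x S] by auto
  qed
  moreover have "?U \<inter> ?V = {}" by auto
  ultimately show ?thesis using that oU by blast
qed

lemma sep_fam:
  fixes A :: "int \<Rightarrow> 'a::metric_space set"
  assumes "finite D" "\<forall>a\<in>D. closed (A a)" "\<forall>a\<in>D. \<forall>b\<in>D. a \<noteq> b \<longrightarrow> A a \<inter> A b = {}"
  obtains N where "\<forall>a\<in>D. open (N a) \<and> A a \<subseteq> N a" "\<forall>a\<in>D. \<forall>b\<in>D. a \<noteq> b \<longrightarrow> N a \<inter> N b = {}"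
proof -
  have "\<forall>p. \<exists>UV. fst p \<in> D \<and> snd p \<in> D \<and> fst p < snd p \<longrightarrow>
      open (fst UV) \<and> open (snd UV) \<and> A (fst p) \<subseteq> fst UV \<and> A (snd p) \<subseteq> snd UV \<and> fst UV \<inter> snd UV = {}"
  proof
    fix p :: "int \<times> int"
    show "\<exists>UV. fst p \<in> D \<and> snd p \<in> D \<and> fst p < snd p \<longrightarrow>
      open (fst UV) \<and> open (snd UV) \<and> A (fst p) \<subseteq> fst UV \<and> A (snd p) \<subseteq> snd UV \<and> fst UV \<inter> snd UV = {}"
    proof (cases "fst p \<in> D \<and> snd p \<in> D \<and> fst p < snd p")
      case True
      then obtain U V where "open U" "open V" "A (fst p) \<subseteq> U" "A (snd p) \<subseteq> V" "U \<inter> V = {}"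
        using sep_closed[of "A (fst p)" "A (snd p)"] assms(2,3) by (metis less_irrefl)
      then show ?thesis by (intro exI[where x="(U, V)"]) auto
    next
      case False then show ?thesis by blast
    qed
  qed
  then obtain f where f: "\<And>p. fst p \<in> D \<and> snd p \<in> D \<and> fst p < snd p \<Longrightarrow>
      open (fst (f p)) \<and> open (snd (f p)) \<and> A (fst p) \<subseteq> fst (f p) \<and> A (snd p) \<subseteq> snd (f p) \<and> fst (f p) \<inter> snd (f p) = {}"
    by metis
  define W where "W a b = (if a < b then fst (f (a, b)) else snd (f (b, a)))" for a b
  define N where "N a = (\<Inter>b\<in>D - {a}. W a b)" for a
  have W: "open (W a b) \<and> A a \<subseteq> W a b" if "a \<in> D" "b \<in> D" "a \<noteq> b" for a b
    using f[of "(a, b)"] f[of "(b, a)"] that unfolding W_def by (cases "a < b") auto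
  have Wd: "W a b \<inter> W b a = {}" if "a \<in> D" "b \<in> D" "a \<noteq> b" for a b
    using f[of "(a, b)"] f[of "(b, a)"] that unfolding W_def by (cases "a < b") auto
  show ?thesis
  proof (rule that)
    show "\<forall>a\<in>D. open (N a) \<and> A a \<subseteq> N a"
      unfolding N_def using W assms(1) by (auto intro!: open_INT)
    show "\<forall>a\<in>D. \<forall>b\<in>D. a \<noteq> b \<longrightarrow> N a \<inter> N b = {}"
    proof (intro ballI impI)
      fix a b assume ab: "a \<in> D" "b \<in> D" "a \<noteq> b"
      have "N a \<subseteq> W a b" "N b \<subseteq> W b a" unfolding N_def using ab by auto
      then show "N a \<inter> N b = {}" using Wd[OF ab] by blast
    qed
  qed
qed

lemma thin_empty: "thin h {}"
  by (simp add: thin_def prec_empty)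

lemma thin_Un:
  fixes h :: "'a::metric_space \<Rightarrow> 'a"
  assumes "compact (UNIV :: 'a set)" "infinite (UNIV :: 'a set)" "homeo h" "minimal_map h"
    and "thin h A" "thin h B"
  shows "thin h (A \<union> B)"
  unfolding thin_def
proof (intro conjI allI impI)
  show "closed (A \<union> B)" using assms(5,6) by (simp add: thin_def closed_Un)
  fix U :: "'a set" assume U: "open U \<and> U \<noteq> {}"
  obtain U1 U2 where UU: "open U1" "open U2" "U1 \<noteq> {}" "U2 \<noteq> {}" "U1 \<subseteq> U" "U2 \<subseteq> U" "U1 \<inter> U2 = {}"
    using split_open[OF assms(1-4), of U] U by blast
  have "prec h A U1" "prec h B U2" using assms(5,6) UU by (auto simp: thin_def)
  then have "prec h (A \<union> B) (U1 \<union> U2)" using UU(7) by (rule prec_combine)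
  then show "prec h (A \<union> B) U" using UU by (auto intro: prec_mono)
qed

lemma thin_UN:
  fixes h :: "'a::metric_space \<Rightarrow> 'a"
  assumes "compact (UNIV :: 'a set)" "infinite (UNIV :: 'a set)" "homeo h" "minimal_map h"
  shows "finite K \<Longrightarrow> (\<forall>k\<in>K. thin h (G k)) \<Longrightarrow> thin h (\<Union>k\<in>K. G k)"
proof (induction K rule: finite_induct)
  case empty then show ?case by (simp add: thin_empty)
next
  case (insert k K)
  then show ?case using thin_Un[OF assms] by simp
qed

lemma small_thin:
  fixes h :: "'a::metric_space \<Rightarrow> 'a"
  assumes cpt: "compact (UNIV :: 'a set)" and inf: "infinite (UNIV :: 'a set)"
    and hh: "homeo h" and mm: "minimal_map h"
  shows "closed F \<Longrightarrow> bnd h F m \<Longrightarrow> thin h F"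
proof (induction m arbitrary: F)
  case 0
  then show ?case using bnd_zero thin_empty by metis
next
  case (Suc m)
  have bij: "bij h" using hh by (rule homeo_bij)
  show "thin h F" unfolding thin_def
  proof (intro conjI allI impI)
    show "closed F" by (rule Suc.prems(1))
    fix U :: "'a set" assume U: "open U \<and> U \<noteq> {}"
    obtain U1 U2 where UU: "open U1" "open U2" "U1 \<noteq> {}" "U2 \<noteq> {}" "U1 \<subseteq> U" "U2 \<subseteq> U" "U1 \<inter> U2 = {}"
      using split_open[OF cpt inf hh mm, of U] U by blast
    obtain D where D: "finite D" "F \<subseteq> (\<Union>n\<in>D. zpow h n ` U1)"
      using finite_orbit_cover[OF cpt hh mm UU(1) UU(3) Suc.prems(1)] by blast
    define D' where "D' = uminus ` D"
    have fD': "finite D'" using D(1) unfolding D'_def by simp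
    have covD': "\<exists>a\<in>D'. zpow h a x \<in> U1" if xF: "x \<in> F" for x
    proof -
      obtain n where "n \<in> D" "x \<in> zpow h n ` U1" using D(2) xF by blast
      then show ?thesis unfolding D'_def using zpow_mem_image[OF bij] by blast
    qed
    define K where "K = (\<lambda>p. fst p - snd p) ` {p. fst p \<in> D' \<and> snd p \<in> D' \<and> fst p \<noteq> snd p}"
    have fK: "finite K"
    proof -
      have "{p. fst p \<in> D' \<and> snd p \<in> D' \<and> fst p \<noteq> snd p} \<subseteq> D' \<times> D'" by auto
      then show ?thesis unfolding K_def using fD' by (meson finite_SigmaI finite_imageI finite_subset)
    qed
    have K0: "0 \<notin> K" unfolding K_def by auto
    define G where "G k = F \<inter> zpow h k ` F" for k
    have "\<forall>k\<in>K. thin h (G k)"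
    proof
      fix k assume "k \<in> K"
      then have "k \<noteq> 0" using K0 by auto
      have "closed (G k)" unfolding G_def using Suc.prems(1) closed_zpow_image[OF hh] by (simp add: closed_Int)
      moreover have "bnd h (G k) m" unfolding G_def using bnd_G[OF bij \<open>k \<noteq> 0\<close> Suc.prems(2)] .
      ultimately show "thin h (G k)" by (rule Suc.IH)
    qed
    then have "thin h (\<Union>k\<in>K. G k)" by (rule thin_UN[OF cpt inf hh mm fK])
    then have "prec h (\<Union>k\<in>K. G k) U2" using UU(2,4) by (simp add: thin_def)
    then obtain M2 :: nat and V2 d2 where P2: "\<forall>j\<le>M2. open (V2 j)" "(\<Union>k\<in>K. G k) \<subseteq> (\<Union>j\<le>M2. V2 j)"
        "\<forall>j\<le>M2. zpow h (d2 j) ` V2 j \<subseteq> U2"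
        "\<forall>i\<le>M2. \<forall>j\<le>M2. i \<noteq> j \<longrightarrow> zpow h (d2 i) ` V2 i \<inter> zpow h (d2 j) ` V2 j = {}"
      by (rule precE)
    define N where "N = (\<Union>j\<le>M2. V2 j)"
    have oN: "open N" unfolding N_def using P2(1) by auto
    have precN: "prec h N U2" unfolding N_def by (rule precI[OF P2(1) _ P2(3) P2(4)]) simp
    define F' where "F' = F - N"
    have cF': "closed F'" unfolding F'_def using Suc.prems(1) oN by (simp add: closed_Diff)
    define A where "A a = zpow h a ` F'" for a
    have cA: "\<forall>a\<in>D'. closed (A a)" unfolding A_def using cF' closed_zpow_image[OF hh] by auto
    have dA: "\<forall>a\<in>D'. \<forall>b\<in>D'. a \<noteq> b \<longrightarrow> A a \<inter> A b = {}"
    proof (intro ballI impI)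
      fix a b assume ab: "a \<in> D'" "b \<in> D'" "a \<noteq> b"
      show "A a \<inter> A b = {}"
      proof (rule ccontr)
        assume "A a \<inter> A b \<noteq> {}"
        then obtain p q where pq: "p \<in> F'" "q \<in> F'" "zpow h a p = zpow h b q" unfolding A_def by auto
        have "p = zpow h (- a) (zpow h a p)" using zpow_inv_apply[OF bij] by simp
        also have "\<dots> = zpow h (b - a) q" using pq(3) zpow_add_apply[OF bij, of "- a" b q] by simp
        finally have p: "p = zpow h (b - a) q" .
        have "b - a \<in> K" unfolding K_def using ab by (auto intro!: image_eqI[where x="(b, a)"])
        moreover have "p \<in> G (b - a)" unfolding G_def using p pq(1,2) unfolding F'_def by auto
        ultimately have "p \<in> N" using P2(2) unfolding N_def by blast
        then show False using pq(1) unfolding F'_def by auto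
      qed
    qed
    obtain N' where N': "\<forall>a\<in>D'. open (N' a) \<and> A a \<subseteq> N' a" "\<forall>a\<in>D'. \<forall>b\<in>D'. a \<noteq> b \<longrightarrow> N' a \<inter> N' b = {}"
      using sep_fam[OF fD' cA dA] by blast
    define V1 where "V1 a = zpow h a -` (U1 \<inter> N' a)" for a
    have precF': "prec h F' U1"
    proof (rule prec_fam[where I=D' and V=V1 and d="\<lambda>a. a"])
      show "finite D'" by (rule fD')
      show "\<forall>i\<in>D'. open (V1 i)" unfolding V1_def using N'(1) UU(1) open_zpow_vimage[OF hh] by (auto simp: open_Int)
      show "F' \<subseteq> (\<Union>i\<in>D'. V1 i)"
      proof
        fix x assume x: "x \<in> F'"
        then obtain a where a: "a \<in> D'" "zpow h a x \<in> U1" using covD' unfolding F'_def by blast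
        have "zpow h a x \<in> A a" unfolding A_def using x by simp
        then have "zpow h a x \<in> N' a" using N'(1) a(1) by blast
        then show "x \<in> (\<Union>i\<in>D'. V1 i)" unfolding V1_def using a by blast
      qed
      show "\<forall>i\<in>D'. zpow h i ` V1 i \<subseteq> U1" unfolding V1_def zpow_surj_vimage[OF bij] by auto
      show "\<forall>i\<in>D'. \<forall>j\<in>D'. i \<noteq> j \<longrightarrow> zpow h i ` V1 i \<inter> zpow h j ` V1 j = {}"
        unfolding V1_def zpow_surj_vimage[OF bij] using N'(2) by blast
    qed
    have "prec h (F' \<union> N) (U1 \<union> U2)" using precF' precN UU(7) by (rule prec_combine)
    moreover have "F \<subseteq> F' \<union> N" unfolding F'_def by auto
    ultimately show "prec h F U" using UU(5,6) by (auto intro: prec_mono)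
  qed
qed

lemma forward_hit:
  fixes h :: "'a::metric_space \<Rightarrow> 'a"
  assumes cpt: "compact (UNIV :: 'a set)" and hh: "homeo h" and mm: "minimal_map h"
    and "open U" "U \<noteq> {}"
  shows "\<exists>n. (h ^^ n) x \<in> U"
proof -
  have bij: "bij h" using hh by (rule homeo_bij)
  define E where "E = {x. \<forall>n. (h ^^ n) x \<notin> U}"
  have "E = (\<Inter>n. (h ^^ n) -` (- U))" unfolding E_def by auto
  then have cE: "closed E" using assms(4) closed_zpow_vimage[OF hh, of "- U" "int _"]
    by (auto simp: zpow_nat intro!: closed_INT)
  have hE: "(h ^^ k) ` E \<subseteq> E" for k
  proof
    fix y assume "y \<in> (h ^^ k) ` E"
    then obtain z where z: "z \<in> E" "y = (h ^^ k) z" by blast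
    show "y \<in> E" unfolding E_def
    proof (intro CollectI allI notI)
      fix n assume "(h ^^ n) y \<in> U"
      then have "(h ^^ (n + k)) z \<in> U" using z(2) by (simp add: funpow_add)
      then show False using z(1) unfolding E_def by blast
    qed
  qed
  have "E = {}"
  proof (rule ccontr)
    assume Ene: "E \<noteq> {}"
    define A where "A n = (h ^^ n) ` E" for n
    have cA: "closed (A n)" for n unfolding A_def using closed_zpow_image[OF hh cE, of "int n"] by (simp add: zpow_nat)
    have neA: "A n \<noteq> {}" for n unfolding A_def using Ene by simp
    have decA: "A n \<subseteq> A m" if "m \<le> n" for m n
    proof -
      have "A n = (h ^^ m) ` ((h ^^ (n - m)) ` E)" unfolding A_def using that
        by (simp add: image_comp funpow_add[symmetric])
      then show ?thesis unfolding A_def using hE by blast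
    qed
    define E' where "E' = (\<Inter>n. A n)"
    have "UNIV \<inter> (\<Inter>n\<in>UNIV. A n) \<noteq> {}"
    proof (rule compact_imp_fip_image[OF cpt])
      show "\<And>i. i \<in> UNIV \<Longrightarrow> closed (A i)" using cA by blast
      fix I' :: "nat set" assume I': "finite I'" "I' \<subseteq> UNIV"
      show "UNIV \<inter> (\<Inter>i\<in>I'. A i) \<noteq> {}"
      proof (cases "I' = {}")
        case True then show ?thesis by simp
      next
        case False
        have "A (Max I') \<subseteq> (\<Inter>i\<in>I'. A i)" using decA Max_ge[OF I'(1)] by blast
        then show ?thesis using neA[of "Max I'"] by blast
      qed
    qed
    then have E'ne: "E' \<noteq> {}" unfolding E'_def by simp
    have cE': "closed E'" unfolding E'_def using cA by (auto intro!: closed_INT)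
    have "h ` E' = (\<Inter>n. h ` A n)" unfolding E'_def by (rule bij_image_INT[OF bij])
    also have "\<dots> = (\<Inter>n. A (Suc n))" unfolding A_def by (simp add: image_comp)
    also have "\<dots> = E'"
    proof
      show "E' \<subseteq> (\<Inter>n. A (Suc n))" unfolding E'_def by blast
      show "(\<Inter>n. A (Suc n)) \<subseteq> E'" unfolding E'_def
      proof
        fix y assume y: "y \<in> (\<Inter>n. A (Suc n))"
        show "y \<in> (\<Inter>n. A n)"
        proof
          fix n
          show "y \<in> A n" using y decA[of n "Suc n"] by auto
        qed
      qed
    qed
    finally have "E' = {} \<or> E' = UNIV" using mm cE' unfolding minimal_map_def by blast
    then have "E' = UNIV" using E'ne by blast
    moreover have "A 0 = E" unfolding A_def by simp
    then have "E' \<subseteq> E" unfolding E'_def by blast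
    moreover obtain u where "u \<in> U" using assms(5) by blast
    moreover have "u \<notin> E"
    proof
      assume "u \<in> E"
      then have "(h ^^ 0) u \<notin> U" unfolding E_def by blast
      then show False using \<open>u \<in> U\<close> by simp
    qed
    ultimately show False by blast
  qed
  then show ?thesis unfolding E_def by blast
qed

lemma bounded_return:
  fixes h :: "'a::metric_space \<Rightarrow> 'a"
  assumes cpt: "compact (UNIV :: 'a set)" and hh: "homeo h" and mm: "minimal_map h"
    and "interior Y \<noteq> {}"
  obtains N where "\<forall>x. \<exists>n. 1 \<le> n \<and> n \<le> N \<and> (h ^^ n) x \<in> Y"
proof -
  have cov: "UNIV \<subseteq> (\<Union>n\<in>{1..}. (h ^^ n) -` interior Y)"
  proof
    fix x :: 'a
    obtain n where "(h ^^ n) (h x) \<in> interior Y" using forward_hit[OF cpt hh mm open_interior assms(4)] by blast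
    then have "(h ^^ Suc n) x \<in> interior Y" by (simp add: funpow_swap1)
    then show "x \<in> (\<Union>n\<in>{1..}. (h ^^ n) -` interior Y)" by (intro UN_I[where a="Suc n"]) auto
  qed
  have "open ((h ^^ n) -` interior Y)" for n
    using open_zpow_vimage[OF hh open_interior, of "int n" Y] by (simp add: zpow_nat)
  then obtain C where C: "C \<subseteq> {1..}" "finite C" "UNIV \<subseteq> (\<Union>n\<in>C. (h ^^ n) -` interior Y)"
    using compactE_image[OF cpt _ cov] by metis
  show ?thesis
  proof (rule that[of "Max C"], rule allI)
    fix x :: 'a
    obtain n where "n \<in> C" "(h ^^ n) x \<in> interior Y" using C(3) by blast
    then show "\<exists>n. 1 \<le> n \<and> n \<le> Max C \<and> (h ^^ n) x \<in> Y"
      using C(1,2) Max_ge interior_subset by fastforce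
  qed
qed

lemma frontier_dep:
  fixes g :: "nat \<Rightarrow> 'a::topological_space \<Rightarrow> 'a" and Y C :: "'a set"
  assumes cont: "\<forall>i\<le>n. continuous_on UNIV (g i)"
    and dep: "\<forall>y z. (\<forall>i\<le>n. (g i y \<in> Y) = (g i z \<in> Y)) \<longrightarrow> (y \<in> C \<longleftrightarrow> z \<in> C)"
  shows "frontier C \<subseteq> (\<Union>i\<le>n. g i -` frontier Y)"
proof
  fix x assume xC: "x \<in> frontier C"
  show "x \<in> (\<Union>i\<le>n. g i -` frontier Y)"
  proof (rule ccontr)
    assume nx: "x \<notin> (\<Union>i\<le>n. g i -` frontier Y)"
    define S where "S i = (if g i x \<in> Y then interior Y else interior (- Y))" for i
    define W where "W = (\<Inter>i\<in>{..n}. g i -` S i)"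
    have "open (g i -` S i)" if "i \<le> n" for i
      using open_vimage[of "S i" "g i"] cont that unfolding S_def by simp
    then have oW: "open W" unfolding W_def by (intro open_INT) auto
    have xW: "x \<in> W" unfolding W_def
    proof
      fix i assume i: "i \<in> {..n}"
      then have nf: "g i x \<notin> frontier Y" using nx by blast
      show "x \<in> g i -` S i"
      proof (cases "g i x \<in> Y")
        case True
        then have "g i x \<in> closure Y" using closure_subset by blast
        then show ?thesis using True nf unfolding S_def frontier_def by auto
      next
        case False
        then have "g i x \<notin> interior Y" using interior_subset by blast
        then have "g i x \<notin> closure Y" using nf unfolding frontier_def by auto
        then show ?thesis using False unfolding S_def interior_complement by auto
      qed
    qed
    have same: "w \<in> C \<longleftrightarrow> x \<in> C" if "w \<in> W" for w
    proof -
      have "\<forall>i\<le>n. (g i w \<in> Y) = (g i x \<in> Y)"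
      proof (intro allI impI)
        fix i assume "i \<le> n"
        then have "g i w \<in> S i" using that unfolding W_def by auto
        then show "(g i w \<in> Y) = (g i x \<in> Y)" unfolding S_def
          using interior_subset[of Y] interior_subset[of "- Y"] by (auto split: if_splits)
      qed
      then show ?thesis using dep by blast
    qed
    show False
    proof (cases "x \<in> C")
      case True
      then have "W \<subseteq> C" using same by blast
      then have "x \<in> interior C" using oW xW by (rule interiorI[rotated 2])
      then show False using xC unfolding frontier_def by auto
    next
      case False
      then have "W \<subseteq> - C" using same by blast
      then have "x \<in> interior (- C)" using oW xW by (rule interiorI[rotated 2])
      then show False using xC unfolding frontier_def interior_complement by auto
    qed
  qed
qed

lemma frontier_vimage_sub:
  fixes g :: "'a::topological_space \<Rightarrow> 'b::topological_space"
  assumes "continuous_on UNIV g"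
  shows "frontier (g -` S) \<subseteq> g -` frontier S"
proof -
  have "g -` S \<subseteq> g -` closure S" using closure_subset by blast
  then have "closure (g -` S) \<subseteq> g -` closure S"
    using closure_minimal closed_vimage[OF closed_closure assms] by blast
  moreover have "g -` interior S \<subseteq> g -` S" using interior_subset by blast
  then have "g -` interior S \<subseteq> interior (g -` S)"
    using interior_maximal open_vimage[OF open_interior assms] by blast
  ultimately show ?thesis unfolding frontier_def by auto
qed

lemma frontier_closure_sub: "frontier (closure S) \<subseteq> frontier S"
  unfolding frontier_def using interior_mono[OF closure_subset, of S] by auto

lemma C_char:
  assumes "\<forall>y\<in>Y. \<exists>m\<ge>1. (h ^^ m) y \<in> Y"
  shows "(y \<in> Y \<and> return_time h Y y = n) \<longleftrightarrow>
    (y \<in> Y \<and> 1 \<le> n \<and> (h ^^ n) y \<in> Y \<and> (\<forall>m. 1 \<le> m \<and> m < n \<longrightarrow> (h ^^ m) y \<notin> Y))"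
proof (cases "y \<in> Y")
  case True
  let ?P = "\<lambda>m. 1 \<le> m \<and> (h ^^ m) y \<in> Y"
  have ex: "\<exists>m. ?P m" using assms True by blast
  show ?thesis
  proof
    assume "y \<in> Y \<and> return_time h Y y = n"
    then have n: "(LEAST m. ?P m) = n" unfolding return_time_def by simp
    have "?P n" using LeastI_ex[OF ex] n by simp
    moreover have "\<forall>m. 1 \<le> m \<and> m < n \<longrightarrow> (h ^^ m) y \<notin> Y" using not_less_Least[of _ ?P] n by blast
    ultimately show "y \<in> Y \<and> 1 \<le> n \<and> (h ^^ n) y \<in> Y \<and> (\<forall>m. 1 \<le> m \<and> m < n \<longrightarrow> (h ^^ m) y \<notin> Y)"
      using True by blast
  next
    assume a: "y \<in> Y \<and> 1 \<le> n \<and> (h ^^ n) y \<in> Y \<and> (\<forall>m. 1 \<le> m \<and> m < n \<longrightarrow> (h ^^ m) y \<notin> Y)"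
    have "(LEAST m. ?P m) = n"
      by (rule Least_equality) (use a in \<open>auto simp: not_less[symmetric]\<close>)
    then show "y \<in> Y \<and> return_time h Y y = n" unfolding return_time_def using True by simp
  qed
next
  case False then show ?thesis by simp
qed

theorem lemma5p5:
  fixes h :: "'a::metric_space \<Rightarrow> 'a" and Y :: "'a set"
  assumes "compact (UNIV :: 'a set)" and "infinite (UNIV :: 'a set)"
    and "homeo h" and "minimal_map h"
    and "closed Y" and "interior Y \<noteq> {}" and "top_small h (frontier Y)"
  shows "(\<forall>y\<in>Y. \<exists>m\<ge>1. (h ^^ m) y \<in> Y) \<and> finite (return_time h Y ` Y) \<and>
    (\<forall>n\<in>return_time h Y ` Y. \<forall>j<n.
       thin h (frontier ((h ^^ j) ` closure {y\<in>Y. return_time h Y y = n})))"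
proof -
  note cpt = assms(1) and inf = assms(2) and hh = assms(3) and mm = assms(4)
  have bij: "bij h" using hh by (rule homeo_bij)
  obtain N where N: "\<forall>x. \<exists>n. 1 \<le> n \<and> n \<le> N \<and> (h ^^ n) x \<in> Y"
    using bounded_return[OF cpt hh mm assms(6)] by blast
  have ret: "\<forall>y\<in>Y. \<exists>m\<ge>1. (h ^^ m) y \<in> Y" using N by blast
  have "return_time h Y ` Y \<subseteq> {..N}"
  proof
    fix r assume "r \<in> return_time h Y ` Y"
    then obtain y where y: "y \<in> Y" "r = return_time h Y y" by blast
    obtain n where n: "1 \<le> n" "n \<le> N" "(h ^^ n) y \<in> Y" using N by blast
    have "r \<le> n" unfolding y(2) return_time_def by (rule Least_le) (use n in simp)
    then show "r \<in> {..N}" using n by simp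
  qed
  then have fin: "finite (return_time h Y ` Y)" by (rule finite_subset) simp
  obtain m0 where m0: "bnd h (frontier Y) m0" using top_small_bnd[OF bij assms(7)] by blast
  have thin_part: "thin h (frontier ((h ^^ j) ` closure {y\<in>Y. return_time h Y y = n}))" for n j
  proof -
    define C where "C = {y\<in>Y. return_time h Y y = n}"
    have char: "y \<in> C \<longleftrightarrow> (y \<in> Y \<and> 1 \<le> n \<and> (h ^^ n) y \<in> Y \<and> (\<forall>m. 1 \<le> m \<and> m < n \<longrightarrow> (h ^^ m) y \<notin> Y))" for y
      using C_char[OF ret, of y n] unfolding C_def by simp
    have contg: "\<forall>i\<le>n. continuous_on UNIV (h ^^ i)"
      using cont_zpow[OF hh] by (simp add: zpow_nat[symmetric])
    have dep: "\<forall>y z. (\<forall>i\<le>n. ((h ^^ i) y \<in> Y) = ((h ^^ i) z \<in> Y)) \<longrightarrow> (y \<in> C \<longleftrightarrow> z \<in> C)"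
    proof (intro allI impI)
      fix y z assume A: "\<forall>i\<le>n. ((h ^^ i) y \<in> Y) = ((h ^^ i) z \<in> Y)"
      have e0: "y \<in> Y \<longleftrightarrow> z \<in> Y" using A[rule_format, of 0] by simp
      have en: "(h ^^ n) y \<in> Y \<longleftrightarrow> (h ^^ n) z \<in> Y" using A by simp
      have em: "(\<forall>m. 1 \<le> m \<and> m < n \<longrightarrow> (h ^^ m) y \<notin> Y) \<longleftrightarrow> (\<forall>m. 1 \<le> m \<and> m < n \<longrightarrow> (h ^^ m) z \<notin> Y)"
        using A by (meson less_imp_le)
      show "y \<in> C \<longleftrightarrow> z \<in> C" unfolding char[of y] char[of z] using e0 en em by blast
    qed
    have fC: "frontier C \<subseteq> (\<Union>i\<le>n. (h ^^ i) -` frontier Y)"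
      by (rule frontier_dep[OF contg dep])
    define g where "g = zpow h (- int j)"
    have img: "(h ^^ j) ` closure C = g -` closure C"
      unfolding g_def using zpow_image_eq[OF bij, of "int j" "closure C"] by (simp add: zpow_nat)
    define B where "B = (\<Union>i\<in>{..n}. zpow h (int i - int j) -` frontier Y)"
    have "frontier ((h ^^ j) ` closure C) \<subseteq> g -` frontier (closure C)"
      unfolding img g_def by (rule frontier_vimage_sub[OF cont_zpow[OF hh]])
    also have "\<dots> \<subseteq> g -` frontier C" using frontier_closure_sub by blast
    also have "\<dots> \<subseteq> g -` (\<Union>i\<le>n. (h ^^ i) -` frontier Y)" using fC by blast
    also have "\<dots> = B"
    proof -
      have "(h ^^ i) (g x) = zpow h (int i - int j) x" for i x
        unfolding g_def zpow_nat[symmetric] zpow_add_apply[OF bij] by simp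
      then show ?thesis unfolding B_def by auto
    qed
    finally have sub: "frontier ((h ^^ j) ` closure C) \<subseteq> B" .
    have "bnd h B (card {..n} * m0)" unfolding B_def
      by (rule bnd_UN) (auto intro: bnd_vimage[OF bij m0])
    then have "bnd h (frontier ((h ^^ j) ` closure C)) (card {..n} * m0)" using sub by (rule bnd_subset[rotated])
    then have "thin h (frontier ((h ^^ j) ` closure C))"
      by (rule small_thin[OF cpt inf hh mm frontier_closed])
    then show ?thesis unfolding C_def .
  qed
  show ?thesis using ret fin thin_part by blast
qed

end
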